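(* Let $a<b$ with $[a,b]\subset[0,\infty)$, let $f,g:[a,b]\to\mathbb{R}$ be integrable with $0\le g(t)\le1$ for all $t\in[a,b]$ and such that $\int_a^b g(t)f'(t)\,dt$ exists. Suppose $f$ is absolutely continuous on $[a,b]$ and $|f'|$ is $s$-convex on $[a,b]$ for some fixed $s\in(0,1]$. Let $\lambda:=\int_a^b g(t)\,dt$. Then $$\left|\int_a^{a+\lambda} f(t)\,dt-\int_a^b f(t)g(t)\,dt\right|\le\frac{1}{(s+1)(s+2)}\left[\lambda^2|f'(a)|+(b-a-\lambda)^2|f'(b)|\right]+\frac{1}{s+2}\left[\lambda^2+(b-a-\lambda)^2\right]|f'(a+\lambda)|,$$ and $$\left|\int_a^b f(t)g(t)\,dt-\int_{b-\lambda}^b f(t)\,dt\right|\le\frac{1}{(s+1)(s+2)}\left[\lambda^2|f'(b)|+(b-a-\lambda)^2|f'(a)|\right]+\frac{1}{s+2}\left[\lambda^2+(b-a-\lambda)^2\right]|f'(b-\lambda)|.$$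
   Context: For fixed $s\in(0,1]$, a function $h:I\to\mathbb{R}$ on an interval $I\subset[0,\infty)$ is $s$-convex (in the second sense) if $h(\alpha x+\beta y)\le\alpha^s h(x)+\beta^s h(y)$ for all $x,y\in I$ and all $\alpha,\beta\ge0$ with $\alpha+\beta=1$. *)

theory Defs
  imports "HOL-Analysis.Analysis"
begin

definition s_convex_on :: "real \<Rightarrow> real set \<Rightarrow> (real \<Rightarrow> real) \<Rightarrow> bool" where
  "s_convex_on s I h \<longleftrightarrow>
     (\<forall>x\<in>I. \<forall>y\<in>I. \<forall>\<alpha> \<beta>. \<alpha> \<ge> 0 \<longrightarrow> \<beta> \<ge> 0 \<longrightarrow> \<alpha> + \<beta> = 1 \<longrightarrow>
        h (\<alpha> * x + \<beta> * y) \<le> \<alpha> powr s * h x + \<beta> powr s * h y)"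

definition abs_continuous_on :: "real set \<Rightarrow> (real \<Rightarrow> real) \<Rightarrow> bool" where
  "abs_continuous_on S f \<longleftrightarrow>
     (\<forall>\<epsilon>>0. \<exists>\<delta>>0. \<forall>(n::nat) (u::nat \<Rightarrow> real) (v::nat \<Rightarrow> real).
        (\<forall>i<n. u i \<le> v i \<and> {u i..v i} \<subseteq> S) \<and>
        disjoint_family_on (\<lambda>i. {u i<..<v i}) {..<n} \<and>
        (\<Sum>i<n. v i - u i) < \<delta>
        \<longrightarrow> (\<Sum>i<n. \<bar>f (v i) - f (u i)\<bar>) < \<epsilon>)"

end

theory Submission
  imports Defs
begin

lemma open_interval_component:
  fixes C :: "real set"
  assumes "open C" "connected C" "C \<noteq> {}" "bounded C"
  shows "C = {Inf C<..<Sup C}"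
proof -
  have ba: "bdd_above C" and bb: "bdd_below C"
    using assms(4) bounded_imp_bdd_above bounded_imp_bdd_below by auto
  have iv: "is_interval C" using assms(2) is_interval_connected_1 by blast
  show ?thesis
  proof (intro equalityI subsetI)
    fix x assume x: "x \<in> C"
    obtain e where e: "e > 0" "ball x e \<subseteq> C" using assms(1) x open_contains_ball by blast
    have "x - e/2 \<in> C" "x + e/2 \<in> C" using e by (auto simp: dist_real_def subset_iff)
    then have "Inf C \<le> x - e/2" "x + e/2 \<le> Sup C"
      using ba bb by (auto intro: cInf_lower cSup_upper)
    then show "x \<in> {Inf C<..<Sup C}" using e by auto
  next
    fix x assume x: "x \<in> {Inf C<..<Sup C}"
    then obtain y where "y \<in> C" "y < x" using cInf_less_iff[OF assms(3) bb] by auto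
    moreover obtain z where "z \<in> C" "x < z" using x less_cSup_iff[OF assms(3) ba] by auto
    ultimately show "x \<in> C" using iv unfolding is_interval_1 by (meson less_imp_le)
  qed
qed



lemma bounded_gtlt: "bounded {a<..<b::real}" by (metis bounded_box box_real(1))

lemma meas_ioo_self: "X = {u<..<v} \<Longrightarrow> u < (v::real) \<Longrightarrow> measure lebesgue X = v - u" by simp

lemma ioo_sub: "X = {u<..<v} \<Longrightarrow> u \<le> p \<Longrightarrow> q \<le> (v::real) \<Longrightarrow> {p<..<q} \<subseteq> X" by auto

lemma ac_negligible_image:
  fixes f :: "real \<Rightarrow> real"
  assumes ac: "abs_continuous_on {a..b} f" and cont: "continuous_on {a..b} f"
    and N: "negligible N" "N \<subseteq> {a..b}"
  shows "negligible (f ` N)"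
proof -
  let ?N = "N \<inter> {a<..<b}"
  have sub: "f ` N \<subseteq> insert (f a) (insert (f b) (f ` ?N))" proof
    fix y assume "y \<in> f ` N"
    then obtain x where x: "x \<in> N" "y = f x" by auto
    then have "x = a \<or> x = b \<or> x \<in> ?N" using N(2) by fastforce
    then show "y \<in> insert (f a) (insert (f b) (f ` ?N))" using x by auto
  qed
  have "negligible (f ` ?N)"
    unfolding negligible_outer_le
  proof (intro allI impI)
    fix e :: real assume e: "e > 0"
    then obtain d where d: "d > 0" and D: "\<And>(n::nat) (u::nat \<Rightarrow> real) (v::nat \<Rightarrow> real).
        (\<forall>i<n. u i \<le> v i \<and> {u i..v i} \<subseteq> {a..b}) \<and>
        disjoint_family_on (\<lambda>i. {u i<..<v i}) {..<n} \<and>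
        (\<Sum>i<n. v i - u i) < d
        \<Longrightarrow> (\<Sum>i<n. \<bar>f (v i) - f (u i)\<bar>) < e"
      using ac unfolding abs_continuous_on_def by meson
    have negN: "negligible ?N" using N(1) negligible_subset by blast
    then have "?N \<in> sets lebesgue" by (rule negligible_imp_sets)
    then obtain U where U: "open U" "?N \<subseteq> U" "(U - ?N) \<in> lmeasurable"
         "emeasure lebesgue (U - ?N) < ennreal d"
      using sets_lebesgue_outer_open d by blast
    define V where "V = U \<inter> {a<..<b}"
    have oV: "open V" and NV: "?N \<subseteq> V" and Vab: "V \<subseteq> {a<..<b}" using U by (auto simp: V_def)
    have Vm: "V \<in> lmeasurable"
      by (rule bounded_set_imp_lmeasurable) (use oV Vab bounded_subset[OF bounded_gtlt Vab] in auto)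
    have "emeasure lebesgue V \<le> emeasure lebesgue ((U - ?N) \<union> ?N)"
      proof (rule emeasure_mono)
      show "V \<subseteq> (U - ?N) \<union> ?N" by (auto simp: V_def)
      show "(U - ?N) \<union> ?N \<in> sets lebesgue"
        using U(3) \<open>?N \<in> sets lebesgue\<close> by (intro sets.Un) (auto dest: fmeasurableD)
    qed
    also have "\<dots> \<le> emeasure lebesgue (U - ?N) + emeasure lebesgue ?N"
      by (rule emeasure_subadditive) (use U \<open>?N \<in> sets lebesgue\<close> in auto)
    also have "emeasure lebesgue ?N = 0"
      using negN by (simp add: negligible_iff_emeasure0 \<open>?N \<in> sets lebesgue\<close>)
    finally have "emeasure lebesgue V < ennreal d" using U(4) by simp
    then have mV: "measure lebesgue V < d"
      using Vm d by (simp add: emeasure_eq_measure2 ennreal_less_iff)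
    define \<C> where "\<C> = components V"
    have Cprops: "open C \<and> connected C \<and> C \<noteq> {} \<and> C \<subseteq> {a<..<b} \<and> C = {Inf C<..<Sup C}
        \<and> a \<le> Inf C \<and> Inf C < Sup C \<and> Sup C \<le> b" if "C \<in> \<C>" for C
    proof -
      have o: "open C" using that oV open_components \<C>_def by blast
      have c: "connected C" using that in_components_connected \<C>_def by blast
      have ne: "C \<noteq> {}" using that in_components_nonempty \<C>_def by blast
      have s: "C \<subseteq> {a<..<b}" using that in_components_subset Vab \<C>_def by blast
      have bd: "bounded C" using bounded_subset[OF bounded_gtlt s] by auto
      have eq: "C = {Inf C<..<Sup C}" by (rule open_interval_component[OF o c ne bd])
      then have lt: "Inf C < Sup C" using ne by (metis empty_iff greaterThanLessThan_empty_iff not_le)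
      have "a \<le> Inf C" using s ne by (intro cInf_greatest) auto
      moreover have "Sup C \<le> b" using s ne by (intro cSup_least) auto
      ultimately show ?thesis using o c ne s eq lt by blast
    qed
    have "\<exists>p q. Inf C \<le> p \<and> p \<le> q \<and> q \<le> Sup C \<and>
            f ` {Inf C..Sup C} \<subseteq> {min (f p) (f q)..max (f p) (f q)}" if "C \<in> \<C>" for C
    proof -
      have ab: "a \<le> Inf C" "Inf C < Sup C" "Sup C \<le> b" using Cprops[OF that] by auto
      have cC: "continuous_on {Inf C..Sup C} f"
        by (rule continuous_on_subset[OF cont]) (use ab in auto)
      obtain x1 where x1: "x1 \<in> {Inf C..Sup C}" "\<And>y. y \<in> {Inf C..Sup C} \<Longrightarrow> f x1 \<le> f y"
        using continuous_attains_inf[OF compact_Icc _ cC] ab by auto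
      obtain x2 where x2: "x2 \<in> {Inf C..Sup C}" "\<And>y. y \<in> {Inf C..Sup C} \<Longrightarrow> f y \<le> f x2"
        using continuous_attains_sup[OF compact_Icc _ cC] ab by auto
      have le: "f x1 \<le> f x2" using x1 x2 by blast
      show ?thesis
        apply (rule exI[of _ "min x1 x2"], rule exI[of _ "max x1 x2"])
      proof -
        have "f ` {Inf C..Sup C} \<subseteq> {f x1..f x2}" using x1 x2 by auto
        moreover have "{f x1..f x2} = {min (f (min x1 x2)) (f (max x1 x2))..max (f (min x1 x2)) (f (max x1 x2))}"
          using le by (cases "x1 \<le> x2") (simp_all add: min_def max_def)
        ultimately show "Inf C \<le> min x1 x2 \<and> min x1 x2 \<le> max x1 x2 \<and> max x1 x2 \<le> Sup C \<and>
            f ` {Inf C..Sup C} \<subseteq> {min (f (min x1 x2)) (f (max x1 x2))..max (f (min x1 x2)) (f (max x1 x2))}"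
          using x1(1) x2(1) by auto
      qed
    qed
    then obtain p q where pq: "\<And>C. C \<in> \<C> \<Longrightarrow> Inf C \<le> p C \<and> p C \<le> q C \<and> q C \<le> Sup C \<and>
            f ` {Inf C..Sup C} \<subseteq> {min (f (p C)) (f (q C))..max (f (p C)) (f (q C))}"
      by metis
    define I where "I C = {min (f (p C)) (f (q C))..max (f (p C)) (f (q C))}" for C
    have mI: "measure lebesgue (I C) = \<bar>f (q C) - f (p C)\<bar>" for C
      by (simp add: I_def) linarith
    have pwC: "pairwise disjnt \<C>"
      unfolding pairwise_def disjnt_def \<C>_def by (meson components_nonoverlap)
    have cntC: "countable \<C>"
      by (rule countable_disjoint_open_subsets[OF _ pwC]) (use Cprops in blast)
    have cover: "f ` ?N \<subseteq> (\<Union>C\<in>\<C>. I C)"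
    proof
      fix y assume "y \<in> f ` ?N"
      then obtain x where x: "x \<in> ?N" "y = f x" by auto
      then have "x \<in> V" using NV by auto
      then obtain C where C: "C \<in> \<C>" "x \<in> C" unfolding \<C>_def using Union_components by blast
      then have "x \<in> {Inf C..Sup C}" using Cprops[OF C(1)] by (metis greaterThanLessThan_iff atLeastAtMost_iff less_imp_le)
      then show "y \<in> (\<Union>C\<in>\<C>. I C)" using pq[OF C(1)] C(1) x(2) unfolding I_def by blast
    qed
    have fin: "measure lebesgue (\<Union>C\<in>\<C>'. I C) \<le> e" if sub: "\<C>' \<subseteq> \<C>" and fi: "finite \<C>'" for \<C>'
    proof -
      obtain n :: nat and h where h: "\<C>' = h ` {i. i < n}" "inj_on h {i. i < n}"
        using finite_imp_nat_seg_image_inj_on[OF fi] by blast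
      have hC: "h i \<in> \<C>" if "i < n" for i using h(1) that \<open>\<C>' \<subseteq> \<C>\<close> by blast
      have lt: "{..<n} = {i. i < n}" by auto
      have "(\<Sum>i<n. Sup (h i) - Inf (h i)) = (\<Sum>C\<in>\<C>'. measure lebesgue C)"
      proof -
        have "(\<Sum>C\<in>\<C>'. measure lebesgue C) = (\<Sum>i<n. measure lebesgue (h i))"
          using h by (simp add: sum.reindex lt)
        also have "\<dots> = (\<Sum>i<n. Sup (h i) - Inf (h i))"
        proof (rule sum.cong[OF refl])
          fix i assume "i \<in> {..<n}"
          then have e1: "h i = {Inf (h i)<..<Sup (h i)}" "Inf (h i) < Sup (h i)" using Cprops[OF hC] by auto
          show "measure lebesgue (h i) = Sup (h i) - Inf (h i)"
            by (rule meas_ioo_self[OF e1])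
        qed
        finally show ?thesis by simp
      qed
      also have "\<dots> = measure lebesgue (\<Union>\<C>')"
      proof (rule measure_Union'[symmetric])
        show "finite \<C>'" by fact
        show "S \<in> lmeasurable" if "S \<in> \<C>'" for S
        proof -
          have "S \<in> \<C>" using that \<open>\<C>' \<subseteq> \<C>\<close> by auto
          then have "S = {Inf S<..<Sup S}" using Cprops by blast
          then show ?thesis by (metis lmeasurable_box box_real(1))
        qed
        show "pairwise disjnt \<C>'"
          using pwC \<open>\<C>' \<subseteq> \<C>\<close> pairwise_subset by blast
      qed
      also have "\<dots> \<le> measure lebesgue V"
      proof (rule measure_mono_fmeasurable)
        show "\<Union>\<C>' \<subseteq> V" using \<open>\<C>' \<subseteq> \<C>\<close> in_components_subset unfolding \<C>_def by blast
        show "\<Union>\<C>' \<in> sets lebesgue"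
          using \<open>\<C>' \<subseteq> \<C>\<close> \<open>finite \<C>'\<close> Cprops by (intro sets.finite_Union) (auto intro: borel_open)
      qed (rule Vm)
      finally have sumd: "(\<Sum>i<n. Sup (h i) - Inf (h i)) < d" using mV by linarith
      have "(\<Sum>i<n. \<bar>f (q (h i)) - f (p (h i))\<bar>) < e"
      proof (rule D, intro conjI allI impI)
        fix i assume i: "i < n"
        show "p (h i) \<le> q (h i)" using pq[OF hC[OF i]] by auto
        show "{p (h i)..q (h i)} \<subseteq> {a..b}" using pq[OF hC[OF i]] Cprops[OF hC[OF i]] by auto
      next
        show "disjoint_family_on (\<lambda>i. {p (h i)<..<q (h i)}) {..<n}"
          unfolding disjoint_family_on_def
        proof (intro ballI impI)
          fix i j assume ij: "i \<in> {..<n}" "j \<in> {..<n}" "i \<noteq> j"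
          then have "h i \<noteq> h j" using h(2) by (auto simp: inj_on_def)
          then have "h i \<inter> h j = {}" using components_nonoverlap hC ij unfolding \<C>_def by auto
          moreover have "{p (h k)<..<q (h k)} \<subseteq> h k" if "k < n" for k
          proof (rule ioo_sub)
            show "h k = {Inf (h k)<..<Sup (h k)}" using Cprops[OF hC[OF that]] by blast
            show "Inf (h k) \<le> p (h k)" "q (h k) \<le> Sup (h k)" using pq[OF hC[OF that]] by auto
          qed
          ultimately show "{p (h i)<..<q (h i)} \<inter> {p (h j)<..<q (h j)} = {}" using ij by blast
        qed
      next
        have "(\<Sum>i<n. q (h i) - p (h i)) \<le> (\<Sum>i<n. Sup (h i) - Inf (h i))"
          by (rule sum_mono) (use pq[OF hC] in force)
        then show "(\<Sum>i<n. q (h i) - p (h i)) < d" using sumd by linarith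
      qed
      have "measure lebesgue (\<Union>C\<in>\<C>'. I C) \<le> (\<Sum>C\<in>\<C>'. measure lebesgue (I C))"
        by (rule measure_UNION_le) (auto simp: I_def fi)
      also have "\<dots> = (\<Sum>i<n. \<bar>f (q (h i)) - f (p (h i))\<bar>)"
        using h by (simp add: sum.reindex lt mI)
      finally show ?thesis using \<open>(\<Sum>i<n. \<bar>f (q (h i)) - f (p (h i))\<bar>) < e\<close> by linarith
    qed
    have "(\<Union>C\<in>\<C>. I C) \<in> lmeasurable" "measure lebesgue (\<Union>C\<in>\<C>. I C) \<le> e"
      by (rule fmeasurable_UN_bound[OF cntC _ fin], simp add: I_def, assumption+)
         (rule measure_UN_bound[OF cntC _ fin], simp add: I_def, assumption+)
    then show "\<exists>T. f ` ?N \<subseteq> T \<and> T \<in> lmeasurable \<and> measure lebesgue T \<le> e"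
      using cover by blast
  qed
  then show ?thesis using negligible_subset[OF _ sub] by simp
qed



lemma measure_image_deriv_le:
  fixes g g' :: "real \<Rightarrow> real"
  assumes der: "\<And>x. x \<in> S \<Longrightarrow> (g has_real_derivative g' x) (at x within S)"
    and int: "(\<lambda>x. \<bar>g' x\<bar>) integrable_on S"
  shows "g ` S \<in> lmeasurable \<and> measure lebesgue (g ` S) \<le> integral S (\<lambda>x. \<bar>g' x\<bar>)"
proof -
  let ?lift = "vec :: real \<Rightarrow> real^1"
  let ?G = "\<lambda>x::real^1. ?lift (g (x $ 1))"
  let ?G' = "\<lambda>x::real^1. (*\<^sub>R) (g' (x $ 1)) :: real^1 \<Rightarrow> real^1"
  have der': "(?G has_derivative ?G' x) (at x within ?lift ` S)" if xS: "x \<in> ?lift ` S" for x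
  proof -
    obtain z where z: "z \<in> S" "x = ?lift z" using xS by auto
    have "(g has_derivative (\<lambda>y. y * g' z)) (at z within S)"
      using der[OF z(1)] unfolding has_field_derivative_def by (simp add: mult.commute[of _ "g' z"])
    from has_derivative_vector_1[of g g' z S, OF this] show ?thesis using z by simp
  qed
  have intv: "(\<lambda>x::real^1. \<bar>det (matrix (?G' x))\<bar> * 1) integrable_on ?lift ` S"
  proof -
    obtain y where y: "((\<lambda>x. \<bar>g' x\<bar>) has_integral y) S" using int by blast
    have "((\<lambda>x::real^1. \<bar>g' (x $ 1)\<bar>) has_integral y) S'" if S': "S' = ?lift ` S" for S'
      by (rule has_integral_vec1_D) (use y S' in \<open>simp add: o_def image_image\<close>)
    then show ?thesis by (auto simp: integrable_on_def)
  qed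
  have "(\<lambda>x. 1::real) integrable_on ?G ` (?lift ` S) \<and>
        integral (?G ` (?lift ` S)) (\<lambda>x. 1::real) \<le> integral (?lift ` S) (\<lambda>x. \<bar>det (matrix (?G' x))\<bar> * 1)"
    by (rule integral_on_image_ubound_nonneg[OF _ der' intv]) auto
  moreover have "?G ` (?lift ` S) = ?lift ` (g ` S)" by (auto simp: image_image)
  ultimately have A: "(\<lambda>x. 1::real) integrable_on ?lift ` (g ` S)"
     "integral (?lift ` (g ` S)) (\<lambda>x. 1::real) \<le> integral (?lift ` S) (\<lambda>x. \<bar>g' (x $ 1)\<bar>)"
    by auto
  have e1: "integral (?lift ` (g ` S)) (\<lambda>x. 1::real) = integral (g ` S) (\<lambda>x. 1::real)"
    by (subst integral_vec1_eq) (simp add: image_image o_def)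
  have e2: "integral (?lift ` S) (\<lambda>x. \<bar>g' (x $ 1)\<bar>) = integral S (\<lambda>x. \<bar>g' x\<bar>)"
    by (subst integral_vec1_eq) (simp add: image_image o_def)
  have i1: "(\<lambda>x. 1::real) integrable_on g ` S"
  proof -
    obtain y where "((\<lambda>x. 1::real) has_integral y) (?lift ` (g ` S))" using A(1) by blast
    from has_integral_vec1_I[OF this] show ?thesis by (auto simp: integrable_on_def image_image o_def)
  qed
  then have m: "g ` S \<in> lmeasurable" by (simp add: lmeasurable_iff_integrable_on)
  show ?thesis using m A(2) e1 e2 by (simp add: lmeasure_integral)
qed



lemma deriv_seq_limit:
  fixes f :: "real \<Rightarrow> real"
  assumes der: "(f has_real_derivative D) (at t)" and tb: "t < b"
  shows "(\<lambda>n. real (Suc n) * (f (min (t + 1/real (Suc n)) b) - f t)) \<longlonglongrightarrow> D"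
proof -
  have l0: "(\<lambda>n. 1/real (Suc n)) \<longlonglongrightarrow> 0"
    using LIMSEQ_inverse_real_of_nat by (simp add: inverse_eq_divide)
  have la: "filterlim (\<lambda>n. 1/real (Suc n)) (at 0) sequentially"
    using l0 by (auto simp: filterlim_at)
  have "((\<lambda>h. (f (t + h) - f t) / h) \<longlongrightarrow> D) (at 0)" using der by (simp add: DERIV_def)
  from filterlim_compose[OF this la]
  have A: "(\<lambda>n. real (Suc n) * (f (t + 1/real (Suc n)) - f t)) \<longlonglongrightarrow> D"
    by (simp add: o_def field_simps)
  have "eventually (\<lambda>n. 1/real (Suc n) < b - t) sequentially"
    using order_tendstoD(2)[OF l0, of "b - t"] tb by simp
  then have "eventually (\<lambda>n. real (Suc n) * (f (t + 1/real (Suc n)) - f t) =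
                 real (Suc n) * (f (min (t + 1/real (Suc n)) b) - f t)) sequentially"
    by eventually_elim (simp add: min_def)
  from Lim_transform_eventually[OF A this] show ?thesis .
qed

lemma deriv_measurable:
  fixes f f' :: "real \<Rightarrow> real"
  assumes cont: "continuous_on {a..b} f" and T: "T \<subseteq> {a..<b}" "T \<in> sets lebesgue"
    and der: "\<And>t. t \<in> T \<Longrightarrow> (f has_real_derivative f' t) (at t)"
  shows "f' \<in> borel_measurable (lebesgue_on T)"
proof (rule borel_measurable_LIMSEQ_real)
  fix t assume "t \<in> space (lebesgue_on T)"
  then have "t \<in> T" by simp
  then show "(\<lambda>n. real (Suc n) * (f (min (t + 1/real (Suc n)) b) - f t)) \<longlonglongrightarrow> f' t"
    using deriv_seq_limit[OF der] T(1) by force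
next
  fix n :: nat
  have "continuous_on {a..b} (\<lambda>t. real (Suc n) * (f (min (t + 1/real (Suc n)) b) - f t))"
  proof (intro continuous_intros)
    show "continuous_on {a..b} (\<lambda>t. f (min (t + 1 / real (Suc n)) b))"
    proof (rule continuous_on_compose2[OF cont])
      show "continuous_on {a..b} (\<lambda>t. min (t + 1 / real (Suc n)) b)"
        by (intro continuous_intros)
      show "(\<lambda>t. min (t + 1 / real (Suc n)) b) ` {a..b} \<subseteq> {a..b}"
        by (auto simp: min_def) (smt (verit) of_nat_0_le_iff divide_nonneg_nonneg)
    qed
  qed (rule cont)
  then have "continuous_on T (\<lambda>t. real (Suc n) * (f (min (t + 1/real (Suc n)) b) - f t))"
    by (rule continuous_on_subset) (use T in auto)
  then show "(\<lambda>t. real (Suc n) * (f (min (t + 1/real (Suc n)) b) - f t)) \<in> borel_measurable (lebesgue_on T)"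
    by (rule continuous_imp_measurable_on_sets_lebesgue[OF _ T(2)])
qed



lemma ac_ftc_ineq:
  fixes f f' :: "real \<Rightarrow> real"
  assumes ac: "abs_continuous_on {a..b} f" and cont: "continuous_on {a..b} f"
    and ae: "AE x in lebesgue. x \<in> {a..b} \<longrightarrow> (f has_real_derivative f' x) (at x)"
    and bd: "\<And>t. t \<in> {a..b} \<Longrightarrow> \<bar>f' t\<bar> \<le> K"
    and xy: "a \<le> x" "x \<le> y" "y \<le> b"
  shows "(\<lambda>t. \<bar>f' t\<bar>) integrable_on {x..y} \<and> \<bar>f y - f x\<bar> \<le> integral {x..y} (\<lambda>t. \<bar>f' t\<bar>)"
proof -
  from ae obtain E where E: "{t \<in> space lebesgue. \<not> (t \<in> {a..b} \<longrightarrow> (f has_real_derivative f' t) (at t))} \<subseteq> E"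
      "emeasure lebesgue E = 0" "E \<in> sets lebesgue"
    by (rule AE_E)
  have negE: "negligible E" using E(2,3) by (simp add: negligible_iff_null_sets null_sets_def)
  have derE: "(f has_real_derivative f' t) (at t)" if "t \<in> {a..b}" "t \<notin> E" for t
    using E(1) that by auto
  define T where "T = {x<..<y} - E"
  have Tsub: "T \<subseteq> {a..<b}" using xy by (auto simp: T_def)
  have Tm: "T \<in> sets lebesgue" unfolding T_def using negE
    by (intro sets.Diff) (auto intro: negligible_imp_sets)
  have derT: "(f has_real_derivative f' t) (at t)" if "t \<in> T" for t
    using derE that xy by (auto simp: T_def)
  have meas: "f' \<in> borel_measurable (lebesgue_on T)"
    by (rule deriv_measurable[OF cont Tsub Tm derT])
  then have measa: "(\<lambda>t. \<bar>f' t\<bar>) \<in> borel_measurable (lebesgue_on T)" by measurable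
  have TL: "T \<in> lmeasurable"
    by (rule bounded_set_imp_lmeasurable[OF bounded_subset[OF bounded_box[of x y]] Tm])
       (auto simp: T_def box_real)
  have intT: "(\<lambda>t. \<bar>f' t\<bar>) integrable_on T"
    by (rule measurable_bounded_by_integrable_imp_integrable[OF measa integrable_on_const[OF TL, of K] _ Tm])
       (use bd Tsub in force)
  have negD: "negligible ({x..y} - T)"
    by (rule negligible_subset[of "insert x (insert y E)"]) (use negE in \<open>auto simp: T_def\<close>)
  have e0: "\<And>P. {t \<in> T - {x..y}. P t} = {}" by (auto simp: T_def)
  have e1: "\<And>P. {t \<in> {x..y} - T. P t} \<subseteq> {x..y} - T" by auto
  have intI: "(\<lambda>t. \<bar>f' t\<bar>) integrable_on {x..y}"
    by (rule integrable_spike_set[OF intT]) (simp only: e0 negligible_empty, rule negligible_subset[OF negD e1])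
  have eqI: "integral T (\<lambda>t. \<bar>f' t\<bar>) = integral {x..y} (\<lambda>t. \<bar>f' t\<bar>)"
    by (rule integral_spike_set) (simp only: e0 negligible_empty, rule negligible_subset[OF negD e1])
  have img: "f ` T \<in> lmeasurable" "measure lebesgue (f ` T) \<le> integral T (\<lambda>t. \<bar>f' t\<bar>)"
    using measure_image_deriv_le[of T f f'] derT intT by (auto intro: has_field_derivative_at_within)
  have negI: "negligible (f ` ({x..y} - T))"
    by (rule ac_negligible_image[OF ac cont negD]) (use xy in auto)
  have cxy: "continuous_on {x..y} f" by (rule continuous_on_subset[OF cont]) (use xy in auto)
  have cpt: "compact (f ` {x..y})" by (rule compact_continuous_image[OF cxy compact_Icc])
  have fim: "f ` {x..y} \<in> lmeasurable" by (rule lmeasurable_compact[OF cpt])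
  have "is_interval (f ` {x..y})"
    using connected_continuous_image[OF cxy connected_Icc] is_interval_connected_1 by blast
  then have cv: "convex (f ` {x..y})" by (simp add: is_interval_convex_1)
  have hx: "f x \<in> f ` {x..y}" "f y \<in> f ` {x..y}" using xy by auto
  have "closed_segment (f x) (f y) \<subseteq> f ` {x..y}" by (rule closed_segment_subset[OF hx cv])
  moreover have "closed_segment (f x) (f y) = {min (f x) (f y)..max (f x) (f y)}"
    by (simp add: closed_segment_eq_real_ivl min_def max_def)
  ultimately have sub: "{min (f x) (f y)..max (f x) (f y)} \<subseteq> f ` {x..y}" by simp
  have "\<bar>f y - f x\<bar> = measure lebesgue {min (f x) (f y)..max (f x) (f y)}"
    by simp linarith
  also have "\<dots> \<le> measure lebesgue (f ` {x..y})"
    by (rule measure_mono_fmeasurable[OF sub]) (use fim in \<open>auto dest: fmeasurableD\<close>)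
  also have "\<dots> \<le> measure lebesgue (f ` T \<union> f ` ({x..y} - T))"
    by (rule measure_mono_fmeasurable)
       (use fim img(1) negligible_imp_measurable[OF negI] in \<open>auto dest: fmeasurableD\<close>)
  also have "\<dots> \<le> measure lebesgue (f ` T) + measure lebesgue (f ` ({x..y} - T))"
    by (rule measure_Un_le) (auto intro: fmeasurableD img(1) negligible_imp_sets[OF negI])
  also have "\<dots> \<le> integral {x..y} (\<lambda>t. \<bar>f' t\<bar>)"
    using img(2) eqI negligible_imp_measure0[OF negI] by simp
  finally show ?thesis using intI by simp
qed



lemma mulcancel: "0 < L \<Longrightarrow> 0 < (r::real) \<Longrightarrow> L/(r+1) * ((r+1) * X * (1/L)) = X"
proof -
  assume "0 < L" "0 < r"
  then have "r + 1 \<noteq> 0" "L \<noteq> 0" by auto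
  have "L/(r+1) * ((r+1) * X * (1/L)) = (L * inverse L) * ((r+1) * inverse (r+1)) * X"
    by (simp add: divide_inverse ac_simps)
  also have "\<dots> = X" using \<open>r + 1 \<noteq> 0\<close> \<open>L \<noteq> 0\<close> by simp
  finally show ?thesis .
qed

lemma has_integral_powr_up:
  fixes p L r x y :: real
  assumes "p \<le> x" "x \<le> y" "0 < L" "0 < r"
  shows "((\<lambda>u. ((u - p)/L) powr r) has_integral
           L/(r+1) * (((y-p)/L) powr (r+1) - ((x-p)/L) powr (r+1))) {x..y}"
proof -
  let ?F = "\<lambda>u. L/(r+1) * ((u-p)/L) powr (r+1)"
  have "((\<lambda>u. ((u - p)/L) powr r) has_integral (?F y - ?F x)) {x..y}"
  proof (rule fundamental_theorem_of_calculus_interior[OF assms(2)])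
    show "continuous_on {x..y} ?F"
      using assms by (intro continuous_intros continuous_on_powr') auto
    fix u assume u: "u \<in> {x<..<y}"
    then have pos: "0 < (u-p)/L" using assms by auto
    have "(?F has_real_derivative L/(r+1) * ((r+1) * ((u-p)/L) powr (r+1-1) * (1/L))) (at u)"
      using pos by (auto intro!: derivative_eq_intros)
    moreover have "L/(r+1) * ((r+1) * ((u-p)/L) powr (r+1-1) * (1/L)) = ((u-p)/L) powr r"
      using mulcancel[OF assms(3,4)] by simp
    ultimately show "(?F has_vector_derivative ((u-p)/L) powr r) (at u)"
      by (simp add: has_real_derivative_iff_has_vector_derivative)
  qed
  then show ?thesis by (simp add: right_diff_distrib)
qed

lemma has_integral_powr_down:
  fixes q L r x y :: real
  assumes "y \<le> q" "x \<le> y" "0 < L" "0 < r"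
  shows "((\<lambda>u. ((q - u)/L) powr r) has_integral
           L/(r+1) * (((q-x)/L) powr (r+1) - ((q-y)/L) powr (r+1))) {x..y}"
proof -
  let ?F = "\<lambda>u. - (L/(r+1) * ((q-u)/L) powr (r+1))"
  have "((\<lambda>u. ((q - u)/L) powr r) has_integral (?F y - ?F x)) {x..y}"
  proof (rule fundamental_theorem_of_calculus_interior[OF assms(2)])
    show "continuous_on {x..y} ?F"
      using assms by (intro continuous_intros continuous_on_powr') auto
    fix u assume u: "u \<in> {x<..<y}"
    then have pos: "0 < (q-u)/L" using assms by auto
    have "(?F has_real_derivative - (L/(r+1) * ((r+1) * ((q-u)/L) powr (r+1-1) * (-1/L)))) (at u)"
      using pos by (auto intro!: derivative_eq_intros)
    moreover have "- (L/(r+1) * ((r+1) * ((q-u)/L) powr (r+1-1) * (-1/L))) = ((q-u)/L) powr r"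
      using mulcancel[OF assms(3,4), of "((q-u)/L) powr r"] by simp
    ultimately show "(?F has_vector_derivative ((q-u)/L) powr r) (at u)"
      by (simp add: has_real_derivative_iff_has_vector_derivative)
  qed
  then show ?thesis by (simp add: right_diff_distrib)
qed



lemma alg1: "0 < (s::real) \<Longrightarrow> L/(s+1) * (L - L/(s+2)) = L^2/(s+2)"
proof -
  assume s: "0 < s"
  have "L - L/(s+2) = L*(s+1)/(s+2)" using s by (simp add: field_simps)
  then have "L/(s+1) * (L - L/(s+2)) = (L * L) * ((s+1)/(s+1)) / (s+2)" by simp
  also have "\<dots> = L^2/(s+2)" using s by (simp add: power2_eq_square)
  finally show ?thesis .
qed
lemma alg2: "L/(s+1) * (L/(s+2)) = L^2/((s+1)*(s+2::real))"
  by (simp add: power2_eq_square)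

lemma key_bound:
  fixes f f' :: "real \<Rightarrow> real" and p q s A B :: real
  assumes pq: "p < q" and s: "0 < s"
    and cont: "continuous_on {p..q} f"
    and ftc: "\<And>x y. p \<le> x \<Longrightarrow> x \<le> y \<Longrightarrow> y \<le> q \<Longrightarrow>
               (\<lambda>t. \<bar>f' t\<bar>) integrable_on {x..y} \<and> \<bar>f y - f x\<bar> \<le> integral {x..y} (\<lambda>t. \<bar>f' t\<bar>)"
    and phi: "\<And>u. u \<in> {p..q} \<Longrightarrow> \<bar>f' u\<bar> \<le> ((q-u)/(q-p)) powr s * A + ((u-p)/(q-p)) powr s * B"
  shows "(\<lambda>t. \<bar>f t - f q\<bar>) integrable_on {p..q} \<and>
         integral {p..q} (\<lambda>t. \<bar>f t - f q\<bar>) \<le> (q-p)^2/((s+1)*(s+2)) * A + (q-p)^2/(s+2) * B"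
    and "(\<lambda>t. \<bar>f t - f p\<bar>) integrable_on {p..q} \<and>
         integral {p..q} (\<lambda>t. \<bar>f t - f p\<bar>) \<le> (q-p)^2/(s+2) * A + (q-p)^2/((s+1)*(s+2)) * B"
proof -
  define L where "L = q - p"
  have L: "0 < L" using pq by (simp add: L_def)
  define \<phi> where "\<phi> u = ((q-u)/L) powr s * A + ((u-p)/L) powr s * B" for u
  have phiI: "(\<phi> has_integral ((L/(s+1) * (((q-x)/L) powr (s+1) - ((q-y)/L) powr (s+1))) * A
                + (L/(s+1) * (((y-p)/L) powr (s+1) - ((x-p)/L) powr (s+1))) * B)) {x..y}"
    if "p \<le> x" "x \<le> y" "y \<le> q" for x y
    unfolding \<phi>_def
    by (intro has_integral_add has_integral_mult_left
        has_integral_powr_down has_integral_powr_up) (use that L s in auto)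
  have qq: "(q - q)/L = 0" "(q - p)/L = 1" "(p - p)/L = 0" using L by (auto simp: L_def)
  have fbd: "\<bar>f y - f x\<bar> \<le> (L/(s+1) * (((q-x)/L) powr (s+1) - ((q-y)/L) powr (s+1))) * A
                + (L/(s+1) * (((y-p)/L) powr (s+1) - ((x-p)/L) powr (s+1))) * B"
    if "p \<le> x" "x \<le> y" "y \<le> q" for x y
  proof -
    have "\<bar>f y - f x\<bar> \<le> integral {x..y} (\<lambda>t. \<bar>f' t\<bar>)" using ftc[OF that] by blast
    also have "\<dots> \<le> integral {x..y} \<phi>"
      by (rule integral_le) (use ftc[OF that] phiI[OF that] phi that in \<open>auto simp: \<phi>_def L_def\<close>)
    also have "\<dots> = (L/(s+1) * (((q-x)/L) powr (s+1) - ((q-y)/L) powr (s+1))) * A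
                + (L/(s+1) * (((y-p)/L) powr (s+1) - ((x-p)/L) powr (s+1))) * B"
      by (rule integral_unique[OF phiI[OF that]])
    finally show ?thesis .
  qed
  define c1 where "c1 = L/(s+1)"
  define \<Psi> where "\<Psi> t = (c1 * ((q-t)/L) powr (s+1)) * A + (c1 * (1 - ((t-p)/L) powr (s+1))) * B" for t
  have PsiI: "(\<Psi> has_integral ((c1 * (L/(s+2))) * A + (c1 * (L - L/(s+2))) * B)) {p..q}"
  proof -
    have i1: "((\<lambda>t. ((q-t)/L) powr (s+1)) has_integral L/(s+2)) {p..q}"
      using has_integral_powr_down[of q q p L "s+1"] pq L s qq by (simp add: add.assoc)
    have i2: "((\<lambda>t. ((t-p)/L) powr (s+1)) has_integral L/(s+2)) {p..q}"
      using has_integral_powr_up[of p p q L "s+1"] pq L s qq by (simp add: add.assoc)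
    have i3: "((\<lambda>t. 1::real) has_integral L) {p..q}"
      using has_integral_const_real[of "1::real" p q] pq by (simp add: L_def)
    show ?thesis unfolding \<Psi>_def
      by (intro has_integral_add has_integral_mult_left has_integral_mult_right has_integral_diff i1 i2 i3)
  qed
  have PsiB: "\<bar>f t - f q\<bar> \<le> \<Psi> t" if "t \<in> {p..q}" for t
    using fbd[of t q] that qq by (simp add: \<Psi>_def c1_def abs_minus_commute)
  have cR: "continuous_on {p..q} (\<lambda>t. \<bar>f t - f q\<bar>)" by (intro continuous_intros cont)
  have intR: "(\<lambda>t. \<bar>f t - f q\<bar>) integrable_on {p..q}" by (rule integrable_continuous_interval[OF cR])
  have "integral {p..q} (\<lambda>t. \<bar>f t - f q\<bar>) \<le> integral {p..q} \<Psi>"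
    by (rule integral_le[OF intR]) (use PsiI PsiB in auto)
  also have "\<dots> = (c1 * (L/(s+2))) * A + (c1 * (L - L/(s+2))) * B" by (rule integral_unique[OF PsiI])
  also have "\<dots> = L^2/((s+1)*(s+2)) * A + L^2/(s+2) * B"
    by (simp only: c1_def alg1[OF s] alg2)
  also have "\<dots> = (q-p)^2/((s+1)*(s+2)) * A + (q-p)^2/(s+2) * B" by (simp add: L_def)
  finally show "(\<lambda>t. \<bar>f t - f q\<bar>) integrable_on {p..q} \<and>
         integral {p..q} (\<lambda>t. \<bar>f t - f q\<bar>) \<le> (q-p)^2/((s+1)*(s+2)) * A + (q-p)^2/(s+2) * B"
    using intR by simp
  define \<Psi>' where "\<Psi>' t = (c1 * (1 - ((q-t)/L) powr (s+1))) * A + (c1 * ((t-p)/L) powr (s+1)) * B" for t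
  have PsiI': "(\<Psi>' has_integral ((c1 * (L - L/(s+2))) * A + (c1 * (L/(s+2))) * B)) {p..q}"
  proof -
    have i1: "((\<lambda>t. ((q-t)/L) powr (s+1)) has_integral L/(s+2)) {p..q}"
      using has_integral_powr_down[of q q p L "s+1"] pq L s qq by (simp add: add.assoc)
    have i2: "((\<lambda>t. ((t-p)/L) powr (s+1)) has_integral L/(s+2)) {p..q}"
      using has_integral_powr_up[of p p q L "s+1"] pq L s qq by (simp add: add.assoc)
    have i3: "((\<lambda>t. 1::real) has_integral L) {p..q}"
      using has_integral_const_real[of "1::real" p q] pq by (simp add: L_def)
    show ?thesis unfolding \<Psi>'_def
      by (intro has_integral_add has_integral_mult_left has_integral_mult_right has_integral_diff i1 i2 i3)
  qed
  have PsiB': "\<bar>f t - f p\<bar> \<le> \<Psi>' t" if "t \<in> {p..q}" for t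
    using fbd[of p t] that qq by (simp add: \<Psi>'_def c1_def)
  have cL: "continuous_on {p..q} (\<lambda>t. \<bar>f t - f p\<bar>)" by (intro continuous_intros cont)
  have intL: "(\<lambda>t. \<bar>f t - f p\<bar>) integrable_on {p..q}" by (rule integrable_continuous_interval[OF cL])
  have "integral {p..q} (\<lambda>t. \<bar>f t - f p\<bar>) \<le> integral {p..q} \<Psi>'"
    by (rule integral_le[OF intL]) (use PsiI' PsiB' in auto)
  also have "\<dots> = (c1 * (L - L/(s+2))) * A + (c1 * (L/(s+2))) * B" by (rule integral_unique[OF PsiI'])
  also have "\<dots> = L^2/(s+2) * A + L^2/((s+1)*(s+2)) * B"
    by (simp only: c1_def alg1[OF s] alg2)
  also have "\<dots> = (q-p)^2/(s+2) * A + (q-p)^2/((s+1)*(s+2)) * B" by (simp add: L_def)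
  finally show "(\<lambda>t. \<bar>f t - f p\<bar>) integrable_on {p..q} \<and>
         integral {p..q} (\<lambda>t. \<bar>f t - f p\<bar>) \<le> (q-p)^2/(s+2) * A + (q-p)^2/((s+1)*(s+2)) * B"
    using intL by simp
qed



lemma ac_imp_continuous:
  assumes ac: "abs_continuous_on {a..b} f"
  shows "continuous_on {a..b} f"
  unfolding continuous_on_iff
proof (intro ballI allI impI)
  fix x e assume x: "x \<in> {a..b}" and e: "(0::real) < e"
  then obtain d where d: "d > 0" and D: "\<And>(n::nat) (u::nat \<Rightarrow> real) (v::nat \<Rightarrow> real).
        (\<forall>i<n. u i \<le> v i \<and> {u i..v i} \<subseteq> {a..b}) \<and>
        disjoint_family_on (\<lambda>i. {u i<..<v i}) {..<n} \<and>
        (\<Sum>i<n. v i - u i) < d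
        \<Longrightarrow> (\<Sum>i<n. \<bar>f (v i) - f (u i)\<bar>) < e"
    using ac unfolding abs_continuous_on_def by meson
  show "\<exists>d>0. \<forall>x'\<in>{a..b}. dist x' x < d \<longrightarrow> dist (f x') (f x) < e"
  proof (intro exI[of _ d] conjI ballI impI d)
    fix y assume y: "y \<in> {a..b}" and dy: "dist y x < d"
    have md: "max x y - min x y < d" using dy by (simp add: dist_real_def max_def min_def abs_if split: if_splits)
    have "(\<Sum>i<(1::nat). \<bar>f ((\<lambda>_. max x y) i) - f ((\<lambda>_. min x y) i)\<bar>) < e"
      using D[of 1 "\<lambda>_. min x y" "\<lambda>_. max x y"] x y md
      by (auto simp: dist_real_def disjoint_family_on_def)
    then show "dist (f y) (f x) < e"
      by (simp add: dist_real_def max_def min_def abs_minus_commute split: if_splits)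
  qed
qed

lemma sconv_bound:
  fixes h :: "real \<Rightarrow> real"
  assumes sc: "s_convex_on s {a..b} h" and pq: "a \<le> p" "p < q" "q \<le> b" and u: "u \<in> {p..q}"
  shows "h u \<le> ((q-u)/(q-p)) powr s * h p + ((u-p)/(q-p)) powr s * h q"
proof -
  have ne: "q - p \<noteq> 0" using pq by simp
  have "(q-u)/(q-p) * p + (u-p)/(q-p) * q = ((q-u)*p + (u-p)*q) / (q-p)"
    by (simp add: add_divide_distrib)
  also have "(q-u)*p + (u-p)*q = u*(q-p)" by (simp add: algebra_simps)
  also have "u*(q-p)/(q-p) = u" using ne by simp
  finally have eq: "(q-u)/(q-p) * p + (u-p)/(q-p) * q = u" .
  have sum1: "(q-u)/(q-p) + (u-p)/(q-p) = 1" using ne by (simp add: add_divide_distrib[symmetric])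
  have "h ((q-u)/(q-p) * p + (u-p)/(q-p) * q) \<le> ((q-u)/(q-p)) powr s * h p + ((u-p)/(q-p)) powr s * h q"
  proof -
    have "\<forall>\<alpha>\<ge>0. \<forall>\<beta>\<ge>0. \<alpha> + \<beta> = 1 \<longrightarrow> h (\<alpha> * p + \<beta> * q) \<le> \<alpha> powr s * h p + \<beta> powr s * h q"
      using sc pq unfolding s_convex_on_def by auto
    moreover have "0 \<le> (q-u)/(q-p)" "0 \<le> (u-p)/(q-p)" using pq u by auto
    ultimately show ?thesis using sum1 by blast
  qed
  then show ?thesis using eq by simp
qed

lemma sconv_K:
  fixes h :: "real \<Rightarrow> real"
  assumes sc: "s_convex_on s {a..b} h" and s: "0 < s" and ab: "a < b" and u: "u \<in> {a..b}"
    and nn: "\<And>t. 0 \<le> h t"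
  shows "h u \<le> h a + h b"
proof -
  have "h u \<le> ((b-u)/(b-a)) powr s * h a + ((u-a)/(b-a)) powr s * h b"
    by (rule sconv_bound[OF sc _ ab _ u]) auto
  also have "\<dots> \<le> 1 * h a + 1 * h b"
    using u ab s nn by (intro add_mono mult_right_mono powr_le1) auto
  finally show ?thesis by simp
qed



theorem theorem2p2:
  fixes a b s :: real and f f' g :: "real \<Rightarrow> real"
  assumes "0 \<le> a" and "a < b"
    and "0 < s" and "s \<le> 1"
    and "f integrable_on {a..b}" and "g integrable_on {a..b}"
    and "\<And>t. t \<in> {a..b} \<Longrightarrow> 0 \<le> g t \<and> g t \<le> 1"
    and "(\<lambda>t. g t * f' t) integrable_on {a..b}"
    and "abs_continuous_on {a..b} f"
    and "AE x in lebesgue. x \<in> {a..b} \<longrightarrow> (f has_real_derivative f' x) (at x)"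
    and "s_convex_on s {a..b} (\<lambda>t. \<bar>f' t\<bar>)"
  defines "lam \<equiv> integral {a..b} g"
  shows "(\<bar>integral {a..a+lam} f - integral {a..b} (\<lambda>t. f t * g t)\<bar>
           \<le> 1 / ((s+1)*(s+2)) * (lam^2 * \<bar>f' a\<bar> + (b-a-lam)^2 * \<bar>f' b\<bar>)
             + 1 / (s+2) * (lam^2 + (b-a-lam)^2) * \<bar>f' (a+lam)\<bar>)
       \<and> (\<bar>integral {a..b} (\<lambda>t. f t * g t) - integral {b-lam..b} f\<bar>
           \<le> 1 / ((s+1)*(s+2)) * (lam^2 * \<bar>f' b\<bar> + (b-a-lam)^2 * \<bar>f' a\<bar>)
             + 1 / (s+2) * (lam^2 + (b-a-lam)^2) * \<bar>f' (b-lam)\<bar>)"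
proof -
  note ab = \<open>a < b\<close> and s = \<open>0 < s\<close> and gint = \<open>g integrable_on {a..b}\<close>
    and g01 = \<open>\<And>t. t \<in> {a..b} \<Longrightarrow> 0 \<le> g t \<and> g t \<le> 1\<close>
    and ac = \<open>abs_continuous_on {a..b} f\<close> and ae = \<open>AE x in lebesgue. x \<in> {a..b} \<longrightarrow> (f has_real_derivative f' x) (at x)\<close>
    and sc = \<open>s_convex_on s {a..b} (\<lambda>t. \<bar>f' t\<bar>)\<close>
  have cont: "continuous_on {a..b} f" by (rule ac_imp_continuous[OF ac])
  define K where "K = \<bar>f' a\<bar> + \<bar>f' b\<bar>"
  have bd: "\<bar>f' t\<bar> \<le> K" if "t \<in> {a..b}" for t
    unfolding K_def by (rule sconv_K[OF sc s ab that]) simp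
  have ftc: "(\<lambda>t. \<bar>f' t\<bar>) integrable_on {x..y} \<and> \<bar>f y - f x\<bar> \<le> integral {x..y} (\<lambda>t. \<bar>f' t\<bar>)"
    if "a \<le> x" "x \<le> y" "y \<le> b" for x y
    by (rule ac_ftc_ineq[OF ac cont ae bd that])
  have KB: "((\<lambda>t. \<bar>f t - f q\<bar>) integrable_on {p..q} \<and>
         integral {p..q} (\<lambda>t. \<bar>f t - f q\<bar>) \<le> (q-p)^2/((s+1)*(s+2)) * \<bar>f' p\<bar> + (q-p)^2/(s+2) * \<bar>f' q\<bar>)
       \<and> ((\<lambda>t. \<bar>f t - f p\<bar>) integrable_on {p..q} \<and>
         integral {p..q} (\<lambda>t. \<bar>f t - f p\<bar>) \<le> (q-p)^2/(s+2) * \<bar>f' p\<bar> + (q-p)^2/((s+1)*(s+2)) * \<bar>f' q\<bar>)"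
    if pq: "a \<le> p" "p \<le> q" "q \<le> b" for p q
  proof (cases "p = q")
    case True
    then show ?thesis using integrable_on_refl[of _ p] integral_refl[of p] by (simp add: box_real)
  next
    case False
    then have pq': "p < q" using pq by simp
    have c': "continuous_on {p..q} f" by (rule continuous_on_subset[OF cont]) (use pq in auto)
    have ftc': "(\<lambda>t. \<bar>f' t\<bar>) integrable_on {x..y} \<and> \<bar>f y - f x\<bar> \<le> integral {x..y} (\<lambda>t. \<bar>f' t\<bar>)"
      if "p \<le> x" "x \<le> y" "y \<le> q" for x y using ftc that pq by auto
    have phi': "\<bar>f' u\<bar> \<le> ((q-u)/(q-p)) powr s * \<bar>f' p\<bar> + ((u-p)/(q-p)) powr s * \<bar>f' q\<bar>"
      if "u \<in> {p..q}" for u using sconv_bound[OF sc pq(1) pq' pq(3) that] by simp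
    show ?thesis using key_bound[OF pq' s c' ftc' phi'] by blast
  qed
  have fgint: "(\<lambda>t. f t * g t) integrable_on {a..b}"
  proof -
    have m: "f \<in> borel_measurable (lebesgue_on {a..b})"
      by (rule continuous_imp_measurable_on_sets_lebesgue[OF cont]) simp
    have bnd: "bounded (f ` {a..b})"
      by (rule compact_imp_bounded[OF compact_continuous_image[OF cont compact_Icc]])
    have gabs: "g absolutely_integrable_on {a..b}"
      by (rule nonnegative_absolutely_integrable_1[OF gint]) (use g01 in blast)
    have "(\<lambda>t. f t * g t) absolutely_integrable_on {a..b}"
      by (rule absolutely_integrable_bounded_measurable_product_real[OF m _ bnd gabs]) simp
    then show ?thesis using absolutely_integrable_on_def by blast
  qed
  have fint: "f integrable_on {a..b}" by (rule integrable_continuous_interval[OF cont])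
  have lam0: "0 \<le> lam" unfolding lam_def by (rule integral_nonneg[OF gint]) (use g01 in blast)
  have lam1: "lam \<le> b - a"
  proof -
    have "lam \<le> integral {a..b} (\<lambda>t. 1::real)"
      unfolding lam_def by (rule integral_le[OF gint]) (use g01 ab in auto)
    then show ?thesis using ab by simp
  qed
  have intsub: "h integrable_on {x..y}" if "h integrable_on {a..b}" "a \<le> x" "y \<le> b" for h :: "real \<Rightarrow> real" and x y
    by (rule integrable_on_subinterval[OF that(1)]) (use that in auto)
  have gsplit: "integral {a..c} g + integral {c..b} g = lam"
    and fgsplit: "integral {a..c} (\<lambda>t. f t * g t) + integral {c..b} (\<lambda>t. f t * g t) = integral {a..b} (\<lambda>t. f t * g t)"
    if "a \<le> c" "c \<le> b" for c
    using Henstock_Kurzweil_Integration.integral_combine[OF that gint]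
      Henstock_Kurzweil_Integration.integral_combine[OF that fgint] by (simp_all add: lam_def)
  have hA: "((\<lambda>t. (f t - f c) * w t) has_integral
              (integral {x..y} f - integral {x..y} (\<lambda>t. f t * g t) - f c * (y - x) + f c * integral {x..y} g)) {x..y}"
    if "a \<le> x" "x \<le> y" "y \<le> b" "w = (\<lambda>t. 1 - g t)" for x y c w
  proof -
    have "((\<lambda>t. f t - f t * g t - f c + f c * g t) has_integral
              (integral {x..y} f - integral {x..y} (\<lambda>t. f t * g t) - f c * (y - x) + f c * integral {x..y} g)) {x..y}"
    proof -
      have i1: "f integrable_on {x..y}" using intsub[OF fint] that by auto
      have i2: "(\<lambda>t. f t * g t) integrable_on {x..y}" using intsub[OF fgint] that by auto
      have i3: "g integrable_on {x..y}" using intsub[OF gint] that by auto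
      have i4: "((\<lambda>t. f c) has_integral f c * (y - x)) {x..y}"
        using has_integral_const_real[of "f c" x y] that by (simp add: mult.commute)
      show ?thesis
        by (rule has_integral_add[OF has_integral_diff[OF has_integral_diff[OF integrable_integral[OF i1]
              integrable_integral[OF i2]] i4] has_integral_mult_right[OF integrable_integral[OF i3]]])
    qed
    moreover have "(\<lambda>t. f t - f t * g t - f c + f c * g t) = (\<lambda>t. (f t - f c) * w t)"
      using that by (auto simp: algebra_simps)
    ultimately show ?thesis by simp
  qed
  have hB: "((\<lambda>t. (f t - f c) * g t) has_integral
              (integral {x..y} (\<lambda>t. f t * g t) - f c * integral {x..y} g)) {x..y}"
    if "a \<le> x" "x \<le> y" "y \<le> b" for x y c
  proof -
    have "((\<lambda>t. f t * g t - f c * g t) has_integral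
              (integral {x..y} (\<lambda>t. f t * g t) - f c * integral {x..y} g)) {x..y}"
    proof -
      have i2: "(\<lambda>t. f t * g t) integrable_on {x..y}" using intsub[OF fgint] that by auto
      have i3: "g integrable_on {x..y}" using intsub[OF gint] that by auto
      show ?thesis
        by (rule has_integral_diff[OF integrable_integral[OF i2] has_integral_mult_right[OF integrable_integral[OF i3]]])
    qed
    moreover have "(\<lambda>t. f t * g t - f c * g t) = (\<lambda>t. (f t - f c) * g t)"
      by (auto simp: algebra_simps)
    ultimately show ?thesis by simp
  qed
  have bA: "\<bar>integral {x..y} (\<lambda>t. (f t - f c) * (1 - g t))\<bar> \<le> integral {x..y} (\<lambda>t. \<bar>f t - f c\<bar>)"
    if "a \<le> x" "x \<le> y" "y \<le> b" "(\<lambda>t. \<bar>f t - f c\<bar>) integrable_on {x..y}" for x y c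
  proof -
    have "norm (integral {x..y} (\<lambda>t. (f t - f c) * (1 - g t))) \<le> integral {x..y} (\<lambda>t. \<bar>f t - f c\<bar>)"
    proof (rule integral_norm_bound_integral[OF _ that(4)])
      show "(\<lambda>t. (f t - f c) * (1 - g t)) integrable_on {x..y}" using hA[OF that(1-3) refl] by blast
      fix t assume "t \<in> {x..y}"
      then have "0 \<le> 1 - g t" "1 - g t \<le> 1" using g01[of t] that by auto
      then show "norm ((f t - f c) * (1 - g t)) \<le> \<bar>f t - f c\<bar>"
        by (simp add: abs_mult mult_left_le)
    qed
    then show ?thesis by simp
  qed
  have bB: "\<bar>integral {x..y} (\<lambda>t. (f t - f c) * g t)\<bar> \<le> integral {x..y} (\<lambda>t. \<bar>f t - f c\<bar>)"
    if "a \<le> x" "x \<le> y" "y \<le> b" "(\<lambda>t. \<bar>f t - f c\<bar>) integrable_on {x..y}" for x y c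
  proof -
    have "norm (integral {x..y} (\<lambda>t. (f t - f c) * g t)) \<le> integral {x..y} (\<lambda>t. \<bar>f t - f c\<bar>)"
    proof (rule integral_norm_bound_integral[OF _ that(4)])
      show "(\<lambda>t. (f t - f c) * g t) integrable_on {x..y}" using hB[OF that(1-3)] by blast
      fix t assume "t \<in> {x..y}"
      then have "0 \<le> g t" "g t \<le> 1" using g01[of t] that by auto
      then show "norm ((f t - f c) * g t) \<le> \<bar>f t - f c\<bar>"
        by (simp add: abs_mult mult_left_le)
    qed
    then show ?thesis by simp
  qed
  define c where "c = a + lam"
  have c: "a \<le> c" "c \<le> b" using lam0 lam1 by (auto simp: c_def)
  have id1: "integral {a..c} f - integral {a..b} (\<lambda>t. f t * g t)
      = integral {a..c} (\<lambda>t. (f t - f c) * (1 - g t)) - integral {c..b} (\<lambda>t. (f t - f c) * g t)"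
  proof -
    have A1: "integral {a..c} (\<lambda>t. (f t - f c) * (1 - g t)) = integral {a..c} f - integral {a..c} (\<lambda>t. f t * g t) - f c * (c - a) + f c * integral {a..c} g"
      by (rule integral_unique[OF hA[OF order_refl c(1) c(2) refl, of c]])
    have B1: "integral {c..b} (\<lambda>t. (f t - f c) * g t) = integral {c..b} (\<lambda>t. f t * g t) - f c * integral {c..b} g"
      by (rule integral_unique[OF hB[OF c(1) c(2) order_refl, of c]])
    have "f c * integral {a..c} g + f c * integral {c..b} g = f c * (c - a)"
      using gsplit[OF c] by (simp add: c_def distrib_left[symmetric])
    then show ?thesis unfolding A1 B1 using fgsplit[OF c] by linarith
  qed
  note KB1 = KB[OF order_refl c(1) c(2)] and KB2 = KB[OF c order_refl]
  have "\<bar>integral {a..c} f - integral {a..b} (\<lambda>t. f t * g t)\<bar>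
      \<le> integral {a..c} (\<lambda>t. \<bar>f t - f c\<bar>) + integral {c..b} (\<lambda>t. \<bar>f t - f c\<bar>)"
    unfolding id1 using bA[OF order_refl c(1) c(2), of c] bB[OF c(1) c(2) order_refl, of c] KB1 KB2
    by linarith
  also have "\<dots> \<le> ((c-a)^2/((s+1)*(s+2)) * \<bar>f' a\<bar> + (c-a)^2/(s+2) * \<bar>f' c\<bar>)
       + ((b-c)^2/(s+2) * \<bar>f' c\<bar> + (b-c)^2/((s+1)*(s+2)) * \<bar>f' b\<bar>)"
    using KB1 KB2 by linarith
  also have "\<dots> = 1 / ((s+1)*(s+2)) * (lam^2 * \<bar>f' a\<bar> + (b-a-lam)^2 * \<bar>f' b\<bar>)
             + 1 / (s+2) * (lam^2 + (b-a-lam)^2) * \<bar>f' (a+lam)\<bar>"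
    by (simp add: c_def divide_inverse algebra_simps)
  finally have P1: "\<bar>integral {a..a+lam} f - integral {a..b} (\<lambda>t. f t * g t)\<bar>
           \<le> 1 / ((s+1)*(s+2)) * (lam^2 * \<bar>f' a\<bar> + (b-a-lam)^2 * \<bar>f' b\<bar>)
             + 1 / (s+2) * (lam^2 + (b-a-lam)^2) * \<bar>f' (a+lam)\<bar>" by (simp add: c_def)
  define d where "d = b - lam"
  have d: "a \<le> d" "d \<le> b" using lam0 lam1 by (auto simp: d_def)
  have id2: "integral {a..b} (\<lambda>t. f t * g t) - integral {d..b} f
      = integral {a..d} (\<lambda>t. (f t - f d) * g t) - integral {d..b} (\<lambda>t. (f t - f d) * (1 - g t))"
  proof -
    have A1: "integral {d..b} (\<lambda>t. (f t - f d) * (1 - g t)) = integral {d..b} f - integral {d..b} (\<lambda>t. f t * g t) - f d * (b - d) + f d * integral {d..b} g"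
      by (rule integral_unique[OF hA[OF d(1) d(2) order_refl refl, of d]])
    have B1: "integral {a..d} (\<lambda>t. (f t - f d) * g t) = integral {a..d} (\<lambda>t. f t * g t) - f d * integral {a..d} g"
      by (rule integral_unique[OF hB[OF order_refl d(1) d(2), of d]])
    have "f d * integral {a..d} g + f d * integral {d..b} g = f d * (b - d)"
      using gsplit[OF d] by (simp add: d_def distrib_left[symmetric])
    then show ?thesis unfolding A1 B1 using fgsplit[OF d] by linarith
  qed
  note KB3 = KB[OF order_refl d(1) d(2)] and KB4 = KB[OF d order_refl]
  have "\<bar>integral {a..b} (\<lambda>t. f t * g t) - integral {d..b} f\<bar>
      \<le> integral {a..d} (\<lambda>t. \<bar>f t - f d\<bar>) + integral {d..b} (\<lambda>t. \<bar>f t - f d\<bar>)"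
    unfolding id2 using bB[OF order_refl d(1) d(2), of d] bA[OF d(1) d(2) order_refl, of d] KB3 KB4
    by linarith
  also have "\<dots> \<le> ((d-a)^2/((s+1)*(s+2)) * \<bar>f' a\<bar> + (d-a)^2/(s+2) * \<bar>f' d\<bar>)
       + ((b-d)^2/(s+2) * \<bar>f' d\<bar> + (b-d)^2/((s+1)*(s+2)) * \<bar>f' b\<bar>)"
    using KB3 KB4 by linarith
  also have "\<dots> = 1 / ((s+1)*(s+2)) * (lam^2 * \<bar>f' b\<bar> + (b-a-lam)^2 * \<bar>f' a\<bar>)
             + 1 / (s+2) * (lam^2 + (b-a-lam)^2) * \<bar>f' (b-lam)\<bar>"
    by (simp add: d_def divide_inverse algebra_simps)
  finally have P2: "\<bar>integral {a..b} (\<lambda>t. f t * g t) - integral {b-lam..b} f\<bar>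
           \<le> 1 / ((s+1)*(s+2)) * (lam^2 * \<bar>f' b\<bar> + (b-a-lam)^2 * \<bar>f' a\<bar>)
             + 1 / (s+2) * (lam^2 + (b-a-lam)^2) * \<bar>f' (b-lam)\<bar>" by (simp add: d_def)
  show ?thesis using P1 P2 by blast
qed

end
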